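(* Consider the FlexPD-G iterates described in the context with integer $T\ge1$, and let $c_1=1+\alpha\rho(B)$. Choose $\eta_2>0$ and $\eta_3>\rho(B)$ with $\eta_2+\eta_3<2m-\rho(B)$. If $0<\alpha<\frac{\eta_2}{L^2}$ and $0<\beta<\frac{2m-(\eta_2+\eta_3)-\rho(B)}{\rho(A'A)}$, then there exists $\delta_G>0$ such that for all $k\ge0$, \[c_1\|x^{k+1,T}-x^*\|^2+\frac{\alpha}{\beta}\|\lambda^{k+1}-\lambda^*\|^2\le\frac{1}{1+\delta_G}\Big(\|x^{k+1,T-1}-x^*\|^2+\frac{\alpha}{\beta}\|\lambda^k-\lambda^*\|^2+\alpha\rho(B)\|x^k-x^*\|^2\Big).\]
   Context: Setting: $n$ agents are connected by a connected undirected graph with edge set $\mathcal E$, $\epsilon=|\mathcal E|$. For $x\in\mathbb R^n$ let $f(x)=\sum_{i=1}^n f_i(x_i)$, where each $f_i:\mathbb R\to\mathbb R$ is twice differentiable with $m\le f_i''\le L$ for constants $0<m\le L$; $\nabla f(x)=(f_1'(x_1),\dots,f_n'(x_n))'$. $A\in\mathbb R^{\epsilon\times n}$ is the edge–node incidence matrix (null space spanned by the all-ones vector). $B\in\mathbb R^{n\times n}$ is symmetric positive semidefinite with the same null space as $A$, off-diagonal entries nonzero only on edges, and $\rho(B)<m$. $x^*$ is the unique minimizer of $f$ subject to $Ax=0$ and $\lambda^*$ a Lagrange multiplier with $\nabla f(x^* )+A'\lambda^*=0$, $Ax^*=0$, $Bx^*=0$, chosen in the column space of $A$. FlexPD-G: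 given $\alpha,\beta>0$, $T\ge1$, $x^0$ arbitrary, $\lambda^0=0$; for $k\ge0$: $x^{k+1,0}=x^k$; for $t=1,\dots,T$, $x^{k+1,t}=x^{k+1,t-1}-\alpha\nabla f(x^{k+1,t-1})-\alpha A'\lambda^k-\alpha Bx^k$; then $x^{k+1}=x^{k+1,T}$, $\lambda^{k+1}=\lambda^k+\beta Ax^{k+1}$. Notation: $\rho(S)$ largest eigenvalue of symmetric $S$; $\|\cdot\|$ Euclidean norm. *)

theory Defs
  imports "HOL-Analysis.Analysis"
begin

text \<open>Largest eigenvalue of a (symmetric) real square matrix.\<close>
definition max_eig :: "real^'n^'n \<Rightarrow> real" where
  "max_eig S = Max {\<mu>. \<exists>v. v \<noteq> 0 \<and> S *v v = \<mu> *\<^sub>R v}"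

text \<open>Undirected graph on node type 'n with edge type 'e; each edge e joins
  the two distinct nodes fst (ends e) and snd (ends e) (an arbitrary orientation).\<close>
definition adjacent :: "('e \<Rightarrow> 'n \<times> 'n) \<Rightarrow> 'n \<Rightarrow> 'n \<Rightarrow> bool" where
  "adjacent ends i j \<longleftrightarrow> (\<exists>e. ends e = (i, j) \<or> ends e = (j, i))"

definition simple_graph :: "('e \<Rightarrow> 'n \<times> 'n) \<Rightarrow> bool" where
  "simple_graph ends \<longleftrightarrow> (\<forall>e. fst (ends e) \<noteq> snd (ends e)) \<and>
     (\<forall>e e'. ends e' = ends e \<or> ends e' = prod.swap (ends e) \<longrightarrow> e = e')"

definition connected_graph :: "('e \<Rightarrow> 'n \<times> 'n) \<Rightarrow> bool" where
  "connected_graph ends \<longleftrightarrow> (\<forall>i j. (i, j) \<in> {(u, v). adjacent ends u v}\<^sup>*)"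

text \<open>Edge-node incidence matrix.\<close>
definition incidence :: "('e \<Rightarrow> 'n \<times> 'n) \<Rightarrow> real^'n^'e" where
  "incidence ends = (\<chi> e i. if i = fst (ends e) then 1 else if i = snd (ends e) then -1 else 0)"

definition psd :: "real^'n^'n \<Rightarrow> bool" where
  "psd S \<longleftrightarrow> (\<forall>x. 0 \<le> x \<bullet> (S *v x))"

end

theory Submission
  imports Defs
begin

lemma sym_inner:
  fixes S :: "real^'n^'n"
  assumes "transpose S = S"
  shows "x \<bullet> (S *v y) = y \<bullet> (S *v x)"
proof -
  have "x \<bullet> (S *v y) = (x v* S) \<bullet> y" by (simp add: dot_lmul_matrix)
  also have "x v* S = transpose S *v x" by simp
  also have "... = S *v x" using assms by simp
  finally show ?thesis by (simp add: inner_commute)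
qed

lemma eig_finite:
  fixes S :: "real^'n^'n"
  assumes sym: "transpose S = S"
  shows "finite {\<mu>. \<exists>v. v \<noteq> 0 \<and> S *v v = \<mu> *\<^sub>R v}"
proof -
  define \<Lambda> where "\<Lambda> = {\<mu>. \<exists>v. v \<noteq> 0 \<and> S *v v = \<mu> *\<^sub>R v}"
  define V where "V = (\<lambda>\<mu>. SOME v. v \<noteq> 0 \<and> S *v v = \<mu> *\<^sub>R v)"
  have V: "V \<mu> \<noteq> 0 \<and> S *v V \<mu> = \<mu> *\<^sub>R V \<mu>" if "\<mu> \<in> \<Lambda>" for \<mu>
  proof -
    have "\<exists>v. v \<noteq> 0 \<and> S *v v = \<mu> *\<^sub>R v" using that unfolding \<Lambda>_def by simp
    from someI_ex[of "\<lambda>v. v \<noteq> 0 \<and> S *v v = \<mu> *\<^sub>R v", OF this]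
    show ?thesis unfolding V_def .
  qed
  have inj: "inj_on V \<Lambda>"
  proof (rule inj_onI)
    fix a b assume a: "a \<in> \<Lambda>" and b: "b \<in> \<Lambda>" and eq: "V a = V b"
    have Sa: "S *v V a = a *\<^sub>R V a" using V[OF a] by (rule conjunct2)
    have Sb: "S *v V b = b *\<^sub>R V b" using V[OF b] by (rule conjunct2)
    have "a *\<^sub>R V a = b *\<^sub>R V a" using Sa Sb eq by metis
    moreover have "V a \<noteq> 0" using V[OF a] by (rule conjunct1)
    ultimately show "a = b" by (metis scaleR_cancel_right)
  qed
  have orth: "V a \<bullet> V b = 0" if a: "a \<in> \<Lambda>" and b: "b \<in> \<Lambda>" and ne: "a \<noteq> b" for a b
  proof -
    have "V a \<bullet> (S *v V b) = V b \<bullet> (S *v V a)" by (rule sym_inner[OF sym])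
    moreover have "V a \<bullet> (S *v V b) = b * (V a \<bullet> V b)" using V[OF b] by simp
    moreover have "V b \<bullet> (S *v V a) = a * (V b \<bullet> V a)" using V[OF a] by simp
    moreover have "V b \<bullet> V a = V a \<bullet> V b" by (rule inner_commute)
    ultimately have "b * (V a \<bullet> V b) = a * (V a \<bullet> V b)" by simp
    then show ?thesis using ne by simp
  qed
  have "pairwise orthogonal (V ` \<Lambda>)"
  proof (rule pairwiseI)
    fix x y assume x: "x \<in> V ` \<Lambda>" and y: "y \<in> V ` \<Lambda>" and ne: "x \<noteq> y"
    obtain a where a: "a \<in> \<Lambda>" "x = V a" using x by blast
    obtain b where b: "b \<in> \<Lambda>" "y = V b" using y by blast
    have "a \<noteq> b" using ne a b by blast
    then show "orthogonal x y" unfolding orthogonal_def using orth a b by simp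
  qed
  moreover have "0 \<notin> V ` \<Lambda>"
  proof
    assume "0 \<in> V ` \<Lambda>"
    then obtain a where "a \<in> \<Lambda>" "0 = V a" by blast
    then show False using V by metis
  qed
  ultimately have "independent (V ` \<Lambda>)" by (rule pairwise_orthogonal_independent)
  then have "finite (V ` \<Lambda>)" by (rule independent_imp_finite)
  then have "finite \<Lambda>" using inj by (rule finite_imageD)
  then show ?thesis unfolding \<Lambda>_def .
qed

lemma quad_poly_zero:
  fixes a b :: real
  assumes "\<And>t. a * t + b * t\<^sup>2 \<le> 0"
  shows "a = 0"
proof (rule ccontr)
  assume ne: "a \<noteq> 0"
  define c where "c = \<bar>b\<bar> + 1"
  have pos: "c > 0" unfolding c_def by simp
  have cb: "c + b > 0" unfolding c_def by linarith
  define t where "t = a / c"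
  have "a * t + b * t\<^sup>2 = a\<^sup>2 * (c + b) / c\<^sup>2"
    unfolding t_def using pos by (simp add: power2_eq_square field_simps)
  moreover have "a\<^sup>2 * (c + b) / c\<^sup>2 > 0" using ne pos cb by simp
  ultimately have "a * t + b * t\<^sup>2 > 0" by simp
  with assms[of t] show False by simp
qed

lemma rayleigh_aux:
  fixes S :: "real^'n^'n"
  assumes sym: "transpose S = S"
  shows "\<exists>v \<mu>. v \<noteq> 0 \<and> S *v v = \<mu> *\<^sub>R v \<and> (\<forall>x. x \<bullet> (S *v x) \<le> \<mu> * (norm x)\<^sup>2)"
proof -
  let ?q = "\<lambda>x::real^'n. x \<bullet> (S *v x)"
  have cont: "continuous_on (sphere 0 1) ?q"
    by (intro continuous_intros linear_continuous_on) (simp add: matrix_vector_mul_bounded_linear)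
  have ne: "sphere (0::real^'n) 1 \<noteq> {}" by simp
  obtain v where v: "v \<in> sphere 0 1" and vmax: "\<And>y. y \<in> sphere 0 1 \<Longrightarrow> ?q y \<le> ?q v"
    using continuous_attains_sup[OF compact_sphere ne cont] by blast
  define \<mu> where "\<mu> = ?q v"
  have nv: "norm v = 1" using v by simp
  have bound: "?q x \<le> \<mu> * (norm x)\<^sup>2" for x
  proof (cases "x = 0")
    case True then show ?thesis by simp
  next
    case False
    then have nx: "norm x > 0" by simp
    have "(x /\<^sub>R norm x) \<in> sphere 0 1" using False by simp
    then have "?q (x /\<^sub>R norm x) \<le> \<mu>" using vmax \<mu>_def by blast
    moreover have "?q (x /\<^sub>R norm x) = ?q x / (norm x)\<^sup>2"
      using nx by (simp add: matrix_vector_mult_scaleR power2_eq_square divide_inverse)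
    ultimately show ?thesis using nx by (simp add: field_simps)
  qed
  have "w \<bullet> (S *v v - \<mu> *\<^sub>R v) = 0" for w
  proof -
    have "2 * (w \<bullet> (S *v v - \<mu> *\<^sub>R v)) * t + (?q w - \<mu> * (norm w)\<^sup>2) * t\<^sup>2 \<le> 0" for t
    proof -
      have h1: "?q (v + t *\<^sub>R w) \<le> \<mu> * (norm (v + t *\<^sub>R w))\<^sup>2" by (rule bound)
      have h2: "?q (v + t *\<^sub>R w) = \<mu> + 2 * t * (w \<bullet> (S *v v)) + t\<^sup>2 * ?q w"
      proof -
        have "?q (v + t *\<^sub>R w) = ?q v + t * (v \<bullet> (S *v w)) + t * (w \<bullet> (S *v v)) + t\<^sup>2 * ?q w"
          by (simp add: matrix_vector_right_distrib matrix_vector_mult_scaleR inner_add_left inner_add_right power2_eq_square algebra_simps)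
        then show ?thesis using sym_inner[OF sym, of v w] unfolding \<mu>_def by simp
      qed
      have h3: "(norm (v + t *\<^sub>R w))\<^sup>2 = 1 + 2 * t * (w \<bullet> v) + t\<^sup>2 * (norm w)\<^sup>2"
      proof -
        have "(norm (v + t *\<^sub>R w))\<^sup>2 = v \<bullet> v + 2 * t * (w \<bullet> v) + t\<^sup>2 * (w \<bullet> w)"
          unfolding power2_norm_eq_inner
          by (simp add: inner_add_left inner_add_right inner_commute algebra_simps power2_eq_square)
        moreover have "v \<bullet> v = 1" using nv by (metis power2_norm_eq_inner one_power2)
        moreover have "w \<bullet> w = (norm w)\<^sup>2" by (simp add: power2_norm_eq_inner)
        ultimately show ?thesis by simp
      qed
      have e: "w \<bullet> (S *v v - \<mu> *\<^sub>R v) = w \<bullet> (S *v v) - \<mu> * (w \<bullet> v)"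
        by (simp add: inner_diff_right)
      have "2 * (w \<bullet> (S *v v - \<mu> *\<^sub>R v)) * t + (?q w - \<mu> * (norm w)\<^sup>2) * t\<^sup>2
          = ?q (v + t *\<^sub>R w) - \<mu> * (norm (v + t *\<^sub>R w))\<^sup>2"
        unfolding h2 h3 e by (simp add: algebra_simps)
      with h1 show ?thesis by linarith
    qed
    then have "2 * (w \<bullet> (S *v v - \<mu> *\<^sub>R v)) = 0" by (rule quad_poly_zero)
    then show ?thesis by simp
  qed
  then have "S *v v - \<mu> *\<^sub>R v = 0" by (metis inner_eq_zero_iff)
  then have "S *v v = \<mu> *\<^sub>R v" by simp
  moreover have "v \<noteq> 0" using nv by auto
  ultimately show ?thesis using bound by blast
qed

lemma rayleigh:
  fixes S :: "real^'n^'n"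
  assumes sym: "transpose S = S"
  shows "x \<bullet> (S *v x) \<le> max_eig S * (norm x)\<^sup>2"
proof -
  obtain v \<mu> where v: "v \<noteq> 0" "S *v v = \<mu> *\<^sub>R v" and b: "\<And>x. x \<bullet> (S *v x) \<le> \<mu> * (norm x)\<^sup>2"
    using rayleigh_aux[OF sym] by blast
  have "\<mu> \<le> max_eig S" unfolding max_eig_def
    using eig_finite[OF sym] v by (intro Max_ge) auto
  then have "\<mu> * (norm x)\<^sup>2 \<le> max_eig S * (norm x)\<^sup>2" by (simp add: mult_right_mono)
  with b[of x] show ?thesis by linarith
qed

lemma sigma_exists:
  fixes A :: "real^'n^'e"
  shows "\<exists>\<sigma>>0. \<forall>z. \<sigma> * (norm (A *v z))\<^sup>2 \<le> (norm (transpose A *v (A *v z)))\<^sup>2"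
proof -
  define R where "R = range (\<lambda>z. A *v z)"
  define S where "S = R \<inter> sphere 0 1"
  have "subspace R" unfolding R_def
    by (rule linear_subspace_image[OF matrix_vector_mul_linear subspace_UNIV])
  then have "closed R" by (rule closed_subspace)
  then have cS: "compact S" unfolding S_def by (simp add: closed_Int_compact)
  have normal: "y /\<^sub>R norm y \<in> S" if yR: "y \<in> R" and yn: "y \<noteq> 0" for y
  proof -
    obtain z where "y = A *v z" using yR unfolding R_def by auto
    then have "y /\<^sub>R norm y = A *v (z /\<^sub>R norm y)" by (simp add: matrix_vector_mult_scaleR)
    moreover have "norm (y /\<^sub>R norm y) = 1" using yn by simp
    ultimately show ?thesis unfolding S_def R_def by (metis IntI mem_sphere_0 rangeI)
  qed
  show ?thesis
  proof (cases "S = {}")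
    case True
    then have "A *v z = 0" for z using normal[of "A *v z"] unfolding R_def by auto
    then show ?thesis by (intro exI[of _ 1]) simp
  next
    case False
    have cont: "continuous_on S (\<lambda>y. norm (transpose A *v y))"
      by (intro continuous_intros linear_continuous_on)
    obtain y0 where y0: "y0 \<in> S" and ymin: "\<And>y. y \<in> S \<Longrightarrow> norm (transpose A *v y0) \<le> norm (transpose A *v y)"
      using continuous_attains_inf[OF cS False cont] by blast
    obtain z0 where z0: "y0 = A *v z0" using y0 unfolding S_def R_def by auto
    have n1: "norm y0 = 1" using y0 unfolding S_def by simp
    define c where "c = norm (transpose A *v y0)"
    have "c \<noteq> 0"
    proof
      assume "c = 0"
      then have "transpose A *v y0 = 0" unfolding c_def by simp
      then have "y0 v* A = 0" by simp
      then have "y0 \<bullet> (A *v z0) = 0" by (metis dot_lmul_matrix inner_zero_left)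
      then have "y0 \<bullet> y0 = 0" using z0 by simp
      then show False using n1 by simp
    qed
    then have cpos: "c > 0" unfolding c_def by simp
    have "c\<^sup>2 * (norm (A *v z))\<^sup>2 \<le> (norm (transpose A *v (A *v z)))\<^sup>2" for z
    proof (cases "A *v z = 0")
      case True then show ?thesis by simp
    next
      case ne: False
      let ?y = "A *v z"
      have "?y /\<^sub>R norm ?y \<in> S" using normal ne unfolding R_def by auto
      then have "c \<le> norm (transpose A *v (?y /\<^sub>R norm ?y))" unfolding c_def by (rule ymin)
      also have "... = norm (transpose A *v ?y) / norm ?y"
        by (simp add: matrix_vector_mult_scaleR divide_inverse mult.commute)
      finally have "c * norm ?y \<le> norm (transpose A *v ?y)" using ne by (simp add: field_simps)
      moreover have "0 \<le> c * norm ?y" using cpos by simp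
      ultimately have "(c * norm ?y)\<^sup>2 \<le> (norm (transpose A *v ?y))\<^sup>2" by (rule power_mono)
      then show ?thesis by (simp add: power_mult_distrib)
    qed
    then show ?thesis using cpos by (intro exI[of _ "c\<^sup>2"]) simp
  qed
qed

lemma mat_bound:
  fixes B :: "real^'n^'m"
  shows "\<exists>C>0. \<forall>x. norm (B *v x) \<le> C * norm x"
  using bounded_linear.pos_bounded[OF matrix_vector_mul_bounded_linear[of B]]
  by (auto simp: mult.commute)

lemma psd_cross:
  fixes B :: "real^'n^'n"
  assumes sym: "transpose B = B" and psd: "psd B" and t: "t > 0"
  shows "0 \<le> t * (e \<bullet> (B *v e)) + 2 * (e \<bullet> (B *v p)) + (p \<bullet> (B *v p)) / t"
proof -
  have "0 \<le> (t *\<^sub>R e + p) \<bullet> (B *v (t *\<^sub>R e + p))" using psd unfolding psd_def by blast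
  also have "... = t\<^sup>2 * (e \<bullet> (B *v e)) + t * (e \<bullet> (B *v p)) + t * (p \<bullet> (B *v e)) + p \<bullet> (B *v p)"
    by (simp add: matrix_vector_right_distrib matrix_vector_mult_scaleR inner_add_left inner_add_right power2_eq_square algebra_simps)
  also have "... = t * (t * (e \<bullet> (B *v e)) + 2 * (e \<bullet> (B *v p)) + (p \<bullet> (B *v p)) / t)"
    using t sym_inner[OF sym, of p e] by (simp add: algebra_simps power2_eq_square)
  finally show ?thesis using t by (simp add: zero_le_mult_iff)
qed

lemma mvt_bound:
  fixes df d2f :: "real \<Rightarrow> real"
  assumes d2: "\<And>t. (df has_real_derivative d2f t) (at t)"
    and curv: "\<And>t. m \<le> d2f t \<and> d2f t \<le> L"
  shows "\<exists>c. m \<le> c \<and> c \<le> L \<and> df a - df b = c * (a - b)"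
proof (cases "a = b")
  case True then show ?thesis using curv[of a] by auto
next
  case False
  show ?thesis
  proof (cases "b < a")
    case True
    obtain z where "b < z" "z < a" "df a - df b = (a - b) * d2f z"
      using MVT2[OF True, of df d2f] d2 by blast
    then show ?thesis using curv[of z] by (intro exI[of _ "d2f z"]) simp
  next
    case nl: False
    with False have "a < b" by simp
    obtain z where "a < z" "z < b" "df b - df a = (b - a) * d2f z"
      using MVT2[OF \<open>a < b\<close>, of df d2f] d2 by blast
    then have "df a - df b = d2f z * (a - b)" by (simp add: algebra_simps)
    then show ?thesis using curv[of z] by (intro exI[of _ "d2f z"]) simp
  qed
qed

lemma norm3_sq:
  fixes x y z :: "'a::real_normed_vector"
  shows "(norm (x + y + z))\<^sup>2 \<le> 3 * ((norm x)\<^sup>2 + (norm y)\<^sup>2 + (norm z)\<^sup>2)"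
proof -
  have "norm (x + y + z) \<le> norm x + norm y + norm z"
    by (metis add_mono norm_triangle_ineq order_trans order_refl)
  then have "(norm (x + y + z))\<^sup>2 \<le> (norm x + norm y + norm z)\<^sup>2"
    by (simp add: power_mono)
  also have "... \<le> 3 * ((norm x)\<^sup>2 + (norm y)\<^sup>2 + (norm z)\<^sup>2)"
  proof -
    have "0 \<le> (norm x - norm y)\<^sup>2 + (norm y - norm z)\<^sup>2 + (norm x - norm z)\<^sup>2" by simp
    then show ?thesis by (simp add: power2_eq_square algebra_simps)
  qed
  finally show ?thesis .
qed

lemma norm2_diff_sq:
  fixes x y :: "'a::real_inner"
  shows "(norm (x - y))\<^sup>2 \<le> 2 * (norm x)\<^sup>2 + 2 * (norm y)\<^sup>2"
proof -
  have "(norm (x - y))\<^sup>2 + (norm (x + y))\<^sup>2 = 2 * (norm x)\<^sup>2 + 2 * (norm y)\<^sup>2"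
    unfolding power2_norm_eq_inner by (simp add: inner_add_left inner_add_right inner_diff_left inner_diff_right inner_commute)
  then show ?thesis by (smt (verit) zero_le_power2)
qed

lemma norm_sq_sum:
  fixes v :: "real^'n"
  shows "(norm v)\<^sup>2 = (\<Sum>i\<in>UNIV. (v $ i)\<^sup>2)"
  unfolding power2_norm_eq_inner inner_vec_def by (simp add: power2_eq_square)

lemma incidence_nonzero:
  fixes ends :: "'e::finite \<Rightarrow> 'n::finite \<times> 'n"
  shows "incidence ends *v axis (fst (ends e)) 1 \<noteq> 0"
proof -
  have "(incidence ends *v axis (fst (ends e)) 1) $ e = 1"
    by (simp add: matrix_vector_mul_component inner_axis incidence_def)
  then show ?thesis by (metis zero_index zero_neq_one)
qed

theorem theorem3p12:
  fixes ends :: "'e::finite \<Rightarrow> 'n::finite \<times> 'n"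
    and A :: "real^'n^'e" and B :: "real^'n^'n"
    and f :: "'n \<Rightarrow> real \<Rightarrow> real" and df d2f :: "'n \<Rightarrow> real \<Rightarrow> real"
    and m L \<alpha> \<beta> \<eta>2 \<eta>3 :: real and T :: nat
    and xs :: "real^'n" and ls :: "real^'e"
    and x :: "nat \<Rightarrow> real^'n" and xi :: "nat \<Rightarrow> nat \<Rightarrow> real^'n"
    and lam :: "nat \<Rightarrow> real^'e"
  defines "grad \<equiv> (\<lambda>y::real^'n. \<chi> i. df i (y $ i))"
    and "F \<equiv> (\<lambda>y::real^'n. \<Sum>i\<in>UNIV. f i (y $ i))"
  assumes graph: "simple_graph ends" "connected_graph ends"
    and A_def: "A = incidence ends"
    and d1: "\<And>i t. (f i has_real_derivative df i t) (at t)"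
    and d2: "\<And>i t. (df i has_real_derivative d2f i t) (at t)"
    and m_pos: "0 < m" and m_le_L: "m \<le> L"
    and curv: "\<And>i t. m \<le> d2f i t \<and> d2f i t \<le> L"
    and B_sym: "transpose B = B" and B_psd: "psd B"
    and B_null: "{y. B *v y = 0} = {y. A *v y = 0}"
    and B_sparse: "\<And>i j. i \<noteq> j \<Longrightarrow> B $ i $ j \<noteq> 0 \<Longrightarrow> adjacent ends i j"
    and B_small: "max_eig B < m"
    and xs_feas: "A *v xs = 0"
    and xs_min: "\<And>y. A *v y = 0 \<Longrightarrow> y \<noteq> xs \<Longrightarrow> F xs < F y"
    and ls_kkt: "grad xs + transpose A *v ls = 0" "B *v xs = 0"
    and ls_col: "ls \<in> range (\<lambda>z. A *v z)"
    and \<alpha>_pos: "0 < \<alpha>" and \<beta>_pos: "0 < \<beta>" and T_pos: "1 \<le> T"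
    and lam0: "lam 0 = 0"
    and inner0: "\<And>k. xi (Suc k) 0 = x k"
    and inner_step: "\<And>k t. 1 \<le> t \<Longrightarrow> t \<le> T \<Longrightarrow>
        xi (Suc k) t = xi (Suc k) (t - 1) - \<alpha> *\<^sub>R grad (xi (Suc k) (t - 1))
          - \<alpha> *\<^sub>R (transpose A *v lam k) - \<alpha> *\<^sub>R (B *v x k)"
    and x_step: "\<And>k. x (Suc k) = xi (Suc k) T"
    and lam_step: "\<And>k. lam (Suc k) = lam k + \<beta> *\<^sub>R (A *v x (Suc k))"
    and \<eta>2_pos: "0 < \<eta>2" and \<eta>3_gt: "max_eig B < \<eta>3"
    and \<eta>_sum: "\<eta>2 + \<eta>3 < 2 * m - max_eig B"
    and \<alpha>_small: "\<alpha> < \<eta>2 / L\<^sup>2"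
    and \<beta>_small: "\<beta> < (2 * m - (\<eta>2 + \<eta>3) - max_eig B) / max_eig (transpose A ** A)"
  shows "\<exists>\<delta>>0. \<forall>k. (1 + \<alpha> * max_eig B) * (norm (xi (Suc k) T - xs))\<^sup>2
            + \<alpha> / \<beta> * (norm (lam (Suc k) - ls))\<^sup>2
          \<le> 1 / (1 + \<delta>) * ((norm (xi (Suc k) (T - 1) - xs))\<^sup>2
            + \<alpha> / \<beta> * (norm (lam k - ls))\<^sup>2 + \<alpha> * max_eig B * (norm (x k - xs))\<^sup>2)"
proof -
  define \<rho> where "\<rho> = max_eig B"
  define AA where "AA = transpose A ** A"
  define \<rho>A where "\<rho>A = max_eig AA"
  have symAA: "transpose AA = AA" unfolding AA_def by (simp add: matrix_transpose_mul)
  have AAv: "AA *v v = transpose A *v (A *v v)" for v unfolding AA_def by (simp add: matrix_vector_mul_assoc)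
  have AAq: "v \<bullet> (AA *v v) = (norm (A *v v))\<^sup>2" for v
  proof -
    have "v \<bullet> (AA *v v) = v \<bullet> ((A *v v) v* A)" using AAv by simp
    also have "... = (A *v v) \<bullet> (A *v v)" by (metis inner_commute dot_lmul_matrix)
    finally show ?thesis by (simp add: power2_norm_eq_inner)
  qed
  have rayB: "v \<bullet> (B *v v) \<le> \<rho> * (norm v)\<^sup>2" for v unfolding \<rho>_def by (rule rayleigh[OF B_sym])
  have rayA: "(norm (A *v v))\<^sup>2 \<le> \<rho>A * (norm v)\<^sup>2" for v
    using rayleigh[OF symAA, of v] AAq unfolding \<rho>A_def by simp
  have psdB: "0 \<le> v \<bullet> (B *v v)" for v using B_psd unfolding psd_def by blast
  have \<rho>A_nn: "0 \<le> \<rho>A"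
  proof -
    obtain i :: 'n where True by blast
    have "0 \<le> (norm (A *v axis i 1))\<^sup>2" by simp
    also have "... \<le> \<rho>A * (norm (axis i (1::real)))\<^sup>2" by (rule rayA)
    finally show ?thesis by simp
  qed
  have \<rho>_pos: "0 < \<rho>"
  proof (rule ccontr)
    assume "\<not> 0 < \<rho>"
    then have q0: "v \<bullet> (B *v v) = 0" for v
      using rayB[of v] psdB[of v] by (smt (verit) mult_nonpos_nonneg zero_le_power2)
    have "B *v y = 0" for y
    proof -
      let ?w = "B *v y"
      have "0 = (y + ?w) \<bullet> (B *v (y + ?w))" using q0 by simp
      also have "... = y \<bullet> (B *v y) + ?w \<bullet> (B *v ?w) + y \<bullet> (B *v ?w) + ?w \<bullet> (B *v y)"
        by (simp add: matrix_vector_right_distrib inner_add_left inner_add_right)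
      also have "... = 2 * (?w \<bullet> ?w)" using q0 sym_inner[OF B_sym, of y ?w] by simp
      finally show ?thesis by simp
    qed
    then have "A *v y = 0" for y
    proof -
      have "y \<in> {y. B *v y = 0}" using \<open>\<And>y. B *v y = 0\<close> by simp
      then show ?thesis using B_null by simp
    qed
    moreover obtain e0 :: 'e where True by blast
    ultimately show False using incidence_nonzero[of ends e0] A_def by simp
  qed
  define X0 where "X0 = 2 * m - (\<eta>2 + \<eta>3) - \<rho>"
  have X0_pos: "0 < X0" unfolding X0_def using \<eta>_sum \<eta>3_gt \<rho>_def \<rho>_pos by linarith
  have \<beta>\<rho>A: "\<beta> * \<rho>A < X0"
  proof (cases "\<rho>A = 0")
    case True
    then show ?thesis using X0_pos by simp
  next
    case False
    then have "\<rho>A > 0" using \<rho>A_nn by simp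
    then show ?thesis using \<beta>_small unfolding X0_def \<rho>_def \<rho>A_def AA_def
      by (simp add: pos_less_divide_eq mult.commute)
  qed
  have L_pos: "0 < L" using m_pos m_le_L by linarith
  have \<alpha>L: "\<alpha> * L\<^sup>2 < \<eta>2" using \<alpha>_small L_pos by (simp add: pos_less_divide_eq)
  define M where "M = 2 * m - \<alpha> * L\<^sup>2"
  define s where "s = M - \<beta> * \<rho>A - 2 * \<rho>"
  have s_pos: "0 < s" unfolding s_def M_def using \<alpha>L \<beta>\<rho>A \<eta>3_gt \<rho>_def unfolding X0_def by linarith
  have M_pos: "0 < M" unfolding M_def using \<alpha>L \<eta>_sum \<eta>3_gt \<rho>_pos \<rho>_def by linarith
  have \<alpha>M1: "\<alpha> * M \<le> 1"
  proof -
    have sq: "0 \<le> (\<alpha> * L\<^sup>2 - m)\<^sup>2" by simp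
    have mL: "m\<^sup>2 \<le> L\<^sup>2" using m_pos m_le_L by (simp add: power_mono)
    have "L\<^sup>2 * (\<alpha> * M) \<le> L\<^sup>2 * 1"
      using sq mL unfolding M_def by (simp add: power2_eq_square algebra_simps)
    then show ?thesis using L_pos by simp
  qed
  define t where "t = 1 + s / (4 * \<rho>)"
  have st: "0 < s / (4 * \<rho>)" using s_pos \<rho>_pos by simp
  have t_pos: "0 < t" unfolding t_def using st by linarith
  have t\<rho>: "t * \<rho> = \<rho> + s / 4" unfolding t_def using \<rho>_pos by (simp add: field_simps)
  define cP where "cP = \<rho> * (1 - 1 / t)"
  have cP_pos: "0 < cP"
  proof -
    have "1 < t" unfolding t_def using st by linarith
    then show ?thesis unfolding cP_def using \<rho>_pos by simp
  qed
  define K where "K = M - s / 2"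
  define \<gamma> where "\<gamma> = s / 2"
  define a where "a = \<alpha> * K"
  have \<beta>\<rho>A_nn: "0 \<le> \<beta> * \<rho>A" using \<beta>_pos \<rho>A_nn by simp
  have K_pos: "0 < K" unfolding K_def using \<rho>_pos \<beta>\<rho>A_nn s_pos s_def by linarith
  have a_pos: "0 < a" unfolding a_def using \<alpha>_pos K_pos by simp
  have a_lt1: "a < 1"
  proof -
    have "\<alpha> * K < \<alpha> * M" unfolding K_def using \<alpha>_pos s_pos by simp
    then show ?thesis unfolding a_def using \<alpha>M1 by linarith
  qed
  have \<gamma>_pos: "0 < \<gamma>" unfolding \<gamma>_def using s_pos by simp
  have fac: "1 - \<alpha> * M \<le> (1 - a) * (1 - \<alpha> * \<gamma>)"
  proof -
    have "(1 - a) * (1 - \<alpha> * \<gamma>) = 1 - \<alpha> * M + a * (\<alpha> * \<gamma>)"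
      unfolding a_def K_def \<gamma>_def by (simp add: algebra_simps)
    moreover have "0 \<le> a * (\<alpha> * \<gamma>)" using a_pos \<alpha>_pos \<gamma>_pos by simp
    ultimately show ?thesis by linarith
  qed
  obtain \<sigma> where \<sigma>_pos: "\<sigma> > 0" and \<sigma>b: "\<And>z. \<sigma> * (norm (A *v z))\<^sup>2 \<le> (norm (transpose A *v (A *v z)))\<^sup>2"
    using sigma_exists[of A] by blast
  obtain nB where nB_pos: "nB > 0" and nBb: "\<And>v. norm (B *v v) \<le> nB * norm v"
    using mat_bound[of B] by blast
  obtain nA where nA_pos: "nA > 0" and nAb: "\<And>v. norm (AA *v v) \<le> nA * norm v"
    using mat_bound[of AA] by blast
  have lam_col: "lam k \<in> range (\<lambda>z. A *v z)" for k
  proof (induction k)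
    case 0 then show ?case using lam0 by (metis matrix_vector_mult_0_right rangeI)
  next
    case (Suc k)
    then obtain z where "lam k = A *v z" by auto
    then have "lam (Suc k) = A *v (z + \<beta> *\<^sub>R x (Suc k))"
      using lam_step by (simp add: matrix_vector_right_distrib matrix_vector_mult_scaleR)
    then show ?case by auto
  qed
  define C0 where "C0 = \<alpha> / \<beta> * (3 / \<sigma>)"
  have C0_pos: "0 < C0" unfolding C0_def using \<alpha>_pos \<beta>_pos \<sigma>_pos by simp
  define cE where "cE = (1 + \<alpha> * \<rho>) + C0 * (2 / \<alpha>\<^sup>2 + \<beta>\<^sup>2 * nA\<^sup>2)"
  define cD where "cD = C0 * (2 / \<alpha>\<^sup>2)"
  define cPP where "cPP = C0 * nB\<^sup>2"
  have cE_pos: "0 < cE" unfolding cE_def using C0_pos \<alpha>_pos \<rho>_pos by (simp add: add_pos_nonneg)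
  have cD_pos: "0 < cD" unfolding cD_def using C0_pos \<alpha>_pos by simp
  have cPP_pos: "0 < cPP" unfolding cPP_def using C0_pos nB_pos by simp
  define \<delta> where "\<delta> = min (min (\<alpha> * \<gamma> / cD) (\<alpha> * (s / 4) / cE)) (\<alpha> * cP / cPP)"
  have \<delta>_pos: "0 < \<delta>" unfolding \<delta>_def using \<alpha>_pos \<gamma>_pos s_pos cP_pos cE_pos cD_pos cPP_pos by simp
  have \<delta>D': "\<delta> \<le> \<alpha> * \<gamma> / cD" unfolding \<delta>_def by (simp add: min_le_iff_disj)
  have \<delta>E': "\<delta> \<le> \<alpha> * (s / 4) / cE" unfolding \<delta>_def by (simp add: min_le_iff_disj)
  have \<delta>P': "\<delta> \<le> \<alpha> * cP / cPP" unfolding \<delta>_def by (simp add: min_le_iff_disj)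
  have \<delta>D: "\<delta> * cD \<le> \<alpha> * \<gamma>" using \<delta>D' cD_pos by (simp add: le_divide_eq)
  have \<delta>E: "\<delta> * cE \<le> \<alpha> * (s / 4)" using \<delta>E' cE_pos by (simp add: le_divide_eq)
  have \<delta>P: "\<delta> * cPP \<le> \<alpha> * cP" using \<delta>P' cPP_pos by (simp add: le_divide_eq)
  have main: "(1 + \<alpha> * \<rho>) * (norm (xi (Suc k) T - xs))\<^sup>2 + \<alpha> / \<beta> * (norm (lam (Suc k) - ls))\<^sup>2
          \<le> 1 / (1 + \<delta>) * ((norm (xi (Suc k) (T - 1) - xs))\<^sup>2
            + \<alpha> / \<beta> * (norm (lam k - ls))\<^sup>2 + \<alpha> * \<rho> * (norm (x k - xs))\<^sup>2)" for k
  proof -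
    define yv where "yv = xi (Suc k) (T - 1)"
    define dd where "dd = yv - xs"
    define gg where "gg = grad yv - grad xs"
    define uu where "uu = dd - \<alpha> *\<^sub>R gg"
    define mu where "mu = lam k - ls"
    define pp where "pp = x k - xs"
    define hh where "hh = transpose A *v mu + B *v pp"
    define ee where "ee = xi (Suc k) T - xs"
    define mu1 where "mu1 = lam (Suc k) - ls"
    define D where "D = (norm dd)\<^sup>2"
    define E where "E = (norm ee)\<^sup>2"
    define U where "U = (norm uu)\<^sup>2"
    define H where "H = (norm hh)\<^sup>2"
    define P where "P = (norm pp)\<^sup>2"
    define Mu where "Mu = (norm mu)\<^sup>2"
    define Mu1 where "Mu1 = (norm mu1)\<^sup>2"
    define Z where "Z = ee \<bullet> (B *v pp)"
    define X where "X = ee \<bullet> (B *v ee)"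
    define Y where "Y = pp \<bullet> (B *v pp)"
    define N where "N = (norm (A *v ee))\<^sup>2"
    have D_nn: "0 \<le> D" "0 \<le> E" "0 \<le> U" "0 \<le> H" "0 \<le> P" "0 \<le> Mu1"
      unfolding D_def E_def U_def H_def P_def Mu1_def by simp_all
    have g0: "grad xs = - (transpose A *v ls)" using ls_kkt(1) by (simp add: eq_neg_iff_add_eq_0)
    have step: "xi (Suc k) T = yv - \<alpha> *\<^sub>R grad yv - \<alpha> *\<^sub>R (transpose A *v lam k) - \<alpha> *\<^sub>R (B *v x k)"
      unfolding yv_def using inner_step[of T k] T_pos by simp
    have e_eq: "ee = uu - \<alpha> *\<^sub>R hh"
      unfolding ee_def uu_def hh_def dd_def gg_def mu_def pp_def step
      using g0 ls_kkt(2)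
      by (simp add: algebra_simps matrix_vector_mult_diff_distrib scaleR_diff_right)
    have mu1_eq: "mu1 = mu + \<beta> *\<^sub>R (A *v ee)"
      unfolding mu1_def mu_def ee_def lam_step x_step
      using xs_feas by (simp add: algebra_simps matrix_vector_mult_diff_distrib)
    \<comment> \<open>identities\<close>
    have I1: "Mu1 = Mu + 2 * \<beta> * (mu \<bullet> (A *v ee)) + \<beta>\<^sup>2 * N"
      unfolding Mu1_def Mu_def N_def mu1_eq power2_norm_eq_inner
      by (simp add: inner_add_left inner_add_right inner_commute power2_eq_square algebra_simps)
    have I2: "mu \<bullet> (A *v ee) = hh \<bullet> ee - Z"
    proof -
      have "mu \<bullet> (A *v ee) = (transpose A *v mu) \<bullet> ee" by (simp add: dot_lmul_matrix)
      also have "transpose A *v mu = hh - B *v pp" unfolding hh_def by simp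
      finally have "mu \<bullet> (A *v ee) = (hh - B *v pp) \<bullet> ee" .
      then show ?thesis unfolding Z_def by (simp only: inner_diff_left inner_commute[of "B *v pp" ee])
    qed
    have I3: "U = E + 2 * \<alpha> * (ee \<bullet> hh) + \<alpha>\<^sup>2 * H"
    proof -
      have "uu = ee + \<alpha> *\<^sub>R hh" using e_eq by simp
      then have "uu \<bullet> uu = ee \<bullet> ee + 2 * \<alpha> * (ee \<bullet> hh) + \<alpha>\<^sup>2 * (hh \<bullet> hh)"
        by (simp add: inner_add_left inner_add_right inner_commute[of hh ee] power2_eq_square algebra_simps)
      then show ?thesis unfolding U_def E_def H_def power2_norm_eq_inner .
    qed
    have I1': "\<alpha> / \<beta> * Mu1 = \<alpha> / \<beta> * Mu + 2 * \<alpha> * (mu \<bullet> (A *v ee)) + \<alpha> * \<beta> * N"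
      unfolding I1 using \<beta>_pos by (simp add: field_simps power2_eq_square)
    define \<Delta> where "\<Delta> = D + \<alpha> / \<beta> * Mu + \<alpha> * \<rho> * P - ((1 + \<alpha> * \<rho>) * E + \<alpha> / \<beta> * Mu1)"
    have \<Delta>_eq: "\<Delta> = D - U + \<alpha>\<^sup>2 * H + 2 * \<alpha> * Z - \<alpha> * \<beta> * N + \<alpha> * \<rho> * P - \<alpha> * \<rho> * E"
      unfolding \<Delta>_def I1' I2 I3 by (simp add: inner_commute[of hh ee] algebra_simps)
    \<comment> \<open>B1: contraction of the gradient step\<close>
    have B1: "U \<le> (1 - \<alpha> * M) * D"
    proof -
      have ci: "(uu $ i)\<^sup>2 \<le> (1 - \<alpha> * M) * (dd $ i)\<^sup>2" for i
      proof -
        obtain c where c: "m \<le> c" "c \<le> L" and gi: "df i (yv $ i) - df i (xs $ i) = c * (yv $ i - xs $ i)"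
          using mvt_bound[of "df i" "d2f i" m L "yv $ i" "xs $ i"] d2 curv by blast
        have "uu $ i = dd $ i - \<alpha> * (df i (yv $ i) - df i (xs $ i))"
          unfolding uu_def gg_def dd_def grad_def by simp
        also have "... = (1 - \<alpha> * c) * dd $ i" unfolding gi dd_def by (simp add: algebra_simps)
        finally have ui: "uu $ i = (1 - \<alpha> * c) * dd $ i" .
        have c0: "0 \<le> c" using c m_pos by linarith
        have "c\<^sup>2 \<le> L\<^sup>2" using c c0 by (simp add: power_mono)
        then have e1: "\<alpha>\<^sup>2 * c\<^sup>2 \<le> \<alpha>\<^sup>2 * L\<^sup>2" by (simp add: mult_left_mono)
        have e2: "\<alpha> * m \<le> \<alpha> * c" using c \<alpha>_pos by simp
        have e3: "(1 - \<alpha> * c)\<^sup>2 = 1 - 2 * (\<alpha> * c) + \<alpha>\<^sup>2 * c\<^sup>2" by (simp add: power2_eq_square algebra_simps)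
        have e4: "1 - \<alpha> * M = 1 - 2 * (\<alpha> * m) + \<alpha>\<^sup>2 * L\<^sup>2" unfolding M_def by (simp add: power2_eq_square algebra_simps)
        have "(1 - \<alpha> * c)\<^sup>2 \<le> 1 - \<alpha> * M" using e1 e2 e3 e4 by linarith
        then have "(1 - \<alpha> * c)\<^sup>2 * (dd $ i)\<^sup>2 \<le> (1 - \<alpha> * M) * (dd $ i)\<^sup>2" by (simp add: mult_right_mono)
        then show ?thesis unfolding ui by (simp add: power_mult_distrib)
      qed
      have "U = (\<Sum>i\<in>UNIV. (uu $ i)\<^sup>2)" unfolding U_def by (rule norm_sq_sum)
      also have "... \<le> (\<Sum>i\<in>UNIV. (1 - \<alpha> * M) * (dd $ i)\<^sup>2)" by (rule sum_mono) (rule ci)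
      also have "... = (1 - \<alpha> * M) * D" unfolding D_def norm_sq_sum by (simp add: sum_distrib_left)
      finally show ?thesis .
    qed
    have U_le_D: "U \<le> D"
    proof -
      have "0 \<le> \<alpha> * M" using \<alpha>_pos M_pos by simp
      then have "0 \<le> \<alpha> * M * D" using D_nn(1) by simp
      moreover have "(1 - \<alpha> * M) * D = D - \<alpha> * M * D" by (simp add: algebra_simps)
      ultimately have "(1 - \<alpha> * M) * D \<le> D" by linarith
      then show ?thesis using B1 by linarith
    qed
    have B2: "N \<le> \<rho>A * E" unfolding N_def E_def by (rule rayA)
    have B3: "0 \<le> t * X + 2 * Z + Y / t" unfolding X_def Y_def Z_def by (rule psd_cross[OF B_sym B_psd t_pos])
    have X_le: "X \<le> \<rho> * E" unfolding X_def E_def by (rule rayB)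
    have Y_le: "Y \<le> \<rho> * P" unfolding Y_def P_def by (rule rayB)
    \<comment> \<open>B4: Young-type inequality\<close>
    define vv where "vv = \<alpha> *\<^sub>R hh"
    define SS where "SS = uu \<bullet> vv"
    define V where "V = \<alpha>\<^sup>2 * H"
    have VV: "vv \<bullet> vv = V" unfolding vv_def V_def H_def power2_norm_eq_inner by (simp add: power2_eq_square)
    have ES: "E = U - 2 * SS + V"
    proof -
      have "ee = uu - vv" unfolding vv_def by (rule e_eq)
      then have "ee \<bullet> ee = uu \<bullet> uu - 2 * SS + vv \<bullet> vv"
        unfolding SS_def by (simp add: inner_diff_left inner_diff_right inner_commute[of vv uu])
      then show ?thesis unfolding E_def U_def power2_norm_eq_inner VV .
    qed
    have W: "(norm (a *\<^sub>R uu + (1 - a) *\<^sub>R vv))\<^sup>2 = a\<^sup>2 * U + 2 * a * (1 - a) * SS + (1 - a)\<^sup>2 * V"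
    proof -
      have "(a *\<^sub>R uu + (1 - a) *\<^sub>R vv) \<bullet> (a *\<^sub>R uu + (1 - a) *\<^sub>R vv)
          = a\<^sup>2 * (uu \<bullet> uu) + 2 * a * (1 - a) * SS + (1 - a)\<^sup>2 * (vv \<bullet> vv)"
        unfolding SS_def by (simp add: inner_add_left inner_add_right inner_commute[of vv uu] power2_eq_square algebra_simps)
      then show ?thesis unfolding power2_norm_eq_inner U_def VV .
    qed
    have B4: "a * (1 - a) * E \<le> a * U + (1 - a) * V"
    proof -
      have "a * U + (1 - a) * V - a * (1 - a) * E = a\<^sup>2 * U + 2 * a * (1 - a) * SS + (1 - a)\<^sup>2 * V"
        unfolding ES by (simp add: power2_eq_square algebra_simps)
      also have "... \<ge> 0" unfolding W[symmetric] by simp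
      finally show ?thesis by linarith
    qed
    \<comment> \<open>Q bound\<close>
    define Q where "Q = D - U + V - \<alpha> * K * E"
    have Q_bound: "\<alpha> * \<gamma> * D \<le> Q"
    proof -
      have eq1: "(1 - a) * Q = (1 - a) * D - (1 - a) * U + (1 - a) * V - a * (1 - a) * E"
        unfolding Q_def a_def by (simp add: algebra_simps)
      have eq2: "(1 - a) * U + a * U = U" by (simp add: algebra_simps)
      have p4: "(1 - \<alpha> * M) * D \<le> ((1 - a) * (1 - \<alpha> * \<gamma>)) * D" using fac D_nn(1) by (rule mult_right_mono)
      have eq3: "(1 - a) * D - ((1 - a) * (1 - \<alpha> * \<gamma>)) * D = (1 - a) * (\<alpha> * \<gamma> * D)" by (simp add: algebra_simps)
      have "(1 - a) * (\<alpha> * \<gamma> * D) \<le> (1 - a) * Q" using eq1 eq2 eq3 B4 B1 p4 by linarith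
      then show ?thesis using a_lt1 by simp
    qed
    \<comment> \<open>Delta bound\<close>
    have Kexp: "K = \<beta> * \<rho>A + 2 * \<rho> + s / 2" unfolding K_def using s_def by linarith
    have cPexp: "cP = \<rho> - \<rho> / t" unfolding cP_def by (simp add: algebra_simps)
    have f1: "\<alpha> * \<beta> * N \<le> (\<alpha> * \<beta>) * (\<rho>A * E)" using B2 \<alpha>_pos \<beta>_pos by simp
    have z1: "- (t * \<rho>) * E - (\<rho> / t) * P \<le> 2 * Z"
    proof -
      have "t * X \<le> t * (\<rho> * E)" using X_le t_pos by simp
      moreover have "Y / t \<le> (\<rho> * P) / t" using Y_le t_pos by (simp add: divide_right_mono)
      ultimately show ?thesis using B3 by (simp add: algebra_simps)
    qed
    have z2: "- (\<rho> + s / 4) * E - (\<rho> / t) * P \<le> 2 * Z" using z1 unfolding t\<rho> .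
    have f2: "\<alpha> * (- (\<rho> + s / 4) * E - (\<rho> / t) * P) \<le> \<alpha> * (2 * Z)"
      using z2 \<alpha>_pos by simp
    have eqD: "\<Delta> - (Q + \<alpha> * (s / 4) * E + \<alpha> * cP * P)
        = \<alpha> * (2 * Z) - \<alpha> * (- (\<rho> + s / 4) * E - (\<rho> / t) * P) + ((\<alpha> * \<beta>) * (\<rho>A * E) - \<alpha> * \<beta> * N)"
      unfolding \<Delta>_eq Q_def V_def Kexp cPexp by (simp add: algebra_simps)
    have \<Delta>_bound: "Q + \<alpha> * (s / 4) * E + \<alpha> * cP * P \<le> \<Delta>" using eqD f1 f2 by linarith
    \<comment> \<open>LHS bound\<close>
    obtain z1' z2' where "lam (Suc k) = A *v z1'" "ls = A *v z2'" using lam_col[of "Suc k"] ls_col by auto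
    then have mu1_col: "mu1 = A *v (z1' - z2')" unfolding mu1_def by (simp add: matrix_vector_mult_diff_distrib)
    define Wn where "Wn = (norm (transpose A *v mu1))\<^sup>2"
    have s1: "\<sigma> * Mu1 \<le> Wn" unfolding Mu1_def Wn_def mu1_col by (rule \<sigma>b)
    have Amu1: "transpose A *v mu1 = hh + (- (B *v pp)) + \<beta> *\<^sub>R (AA *v ee)"
      unfolding mu1_eq hh_def AAv by (simp add: matrix_vector_right_distrib matrix_vector_mult_scaleR)
    have nBp: "(norm (- (B *v pp)))\<^sup>2 \<le> nB\<^sup>2 * P"
    proof -
      have "norm (B *v pp) \<le> nB * norm pp" by (rule nBb)
      then have "(norm (B *v pp))\<^sup>2 \<le> (nB * norm pp)\<^sup>2" by (simp add: power_mono)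
      then show ?thesis unfolding P_def by (simp add: power_mult_distrib)
    qed
    have nAe: "(norm (\<beta> *\<^sub>R (AA *v ee)))\<^sup>2 \<le> \<beta>\<^sup>2 * nA\<^sup>2 * E"
    proof -
      have "norm (AA *v ee) \<le> nA * norm ee" by (rule nAb)
      then have "(norm (AA *v ee))\<^sup>2 \<le> (nA * norm ee)\<^sup>2" by (simp add: power_mono)
      then have "\<beta>\<^sup>2 * (norm (AA *v ee))\<^sup>2 \<le> \<beta>\<^sup>2 * (nA * norm ee)\<^sup>2" by (simp add: mult_left_mono)
      then show ?thesis unfolding E_def by (simp add: power_mult_distrib mult.assoc)
    qed
    have s2: "Wn \<le> 3 * (H + nB\<^sup>2 * P + \<beta>\<^sup>2 * nA\<^sup>2 * E)"
    proof -
      have "Wn \<le> 3 * ((norm hh)\<^sup>2 + (norm (- (B *v pp)))\<^sup>2 + (norm (\<beta> *\<^sub>R (AA *v ee)))\<^sup>2)"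
        unfolding Wn_def Amu1 by (rule norm3_sq)
      moreover have "(norm hh)\<^sup>2 + (norm (- (B *v pp)))\<^sup>2 + (norm (\<beta> *\<^sub>R (AA *v ee)))\<^sup>2
          \<le> H + nB\<^sup>2 * P + \<beta>\<^sup>2 * nA\<^sup>2 * E"
        unfolding H_def by (intro add_mono order_refl nBp nAe)
      then have "3 * ((norm hh)\<^sup>2 + (norm (- (B *v pp)))\<^sup>2 + (norm (\<beta> *\<^sub>R (AA *v ee)))\<^sup>2)
          \<le> 3 * (H + nB\<^sup>2 * P + \<beta>\<^sup>2 * nA\<^sup>2 * E)" by (rule mult_left_mono) simp
      ultimately show ?thesis by (rule order_trans)
    qed
    have g2: "Mu1 \<le> (3 / \<sigma>) * (H + nB\<^sup>2 * P + \<beta>\<^sup>2 * nA\<^sup>2 * E)"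
    proof -
      have "\<sigma> * Mu1 \<le> 3 * (H + nB\<^sup>2 * P + \<beta>\<^sup>2 * nA\<^sup>2 * E)" using s1 s2 by linarith
      then show ?thesis using \<sigma>_pos by (simp add: field_simps)
    qed
    have g1: "H \<le> (2 / \<alpha>\<^sup>2) * D + (2 / \<alpha>\<^sup>2) * E"
    proof -
      have "\<alpha> *\<^sub>R hh = uu - ee" using e_eq by simp
      then have "(norm (\<alpha> *\<^sub>R hh))\<^sup>2 \<le> 2 * U + 2 * E"
        unfolding U_def E_def by (metis norm2_diff_sq)
      then have "\<alpha>\<^sup>2 * H \<le> 2 * D + 2 * E" using U_le_D unfolding H_def by (simp add: power_mult_distrib)
      then show ?thesis using \<alpha>_pos by (simp add: field_simps)
    qed
    have g3: "\<alpha> / \<beta> * Mu1 \<le> C0 * (H + nB\<^sup>2 * P + \<beta>\<^sup>2 * nA\<^sup>2 * E)"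
    proof -
      have "\<alpha> / \<beta> * Mu1 \<le> \<alpha> / \<beta> * ((3 / \<sigma>) * (H + nB\<^sup>2 * P + \<beta>\<^sup>2 * nA\<^sup>2 * E))"
      proof -
        have ab: "0 \<le> \<alpha> / \<beta>" using \<alpha>_pos \<beta>_pos by simp
        show ?thesis by (rule mult_left_mono[OF g2 ab])
      qed
      then show ?thesis unfolding C0_def by (simp add: mult.assoc)
    qed
    have g4: "C0 * (H + nB\<^sup>2 * P + \<beta>\<^sup>2 * nA\<^sup>2 * E) \<le> C0 * ((2 / \<alpha>\<^sup>2) * D + (2 / \<alpha>\<^sup>2) * E + nB\<^sup>2 * P + \<beta>\<^sup>2 * nA\<^sup>2 * E)"
      using g1 C0_pos by (intro mult_left_mono) auto
    have g5: "C0 * ((2 / \<alpha>\<^sup>2) * D + (2 / \<alpha>\<^sup>2) * E + nB\<^sup>2 * P + \<beta>\<^sup>2 * nA\<^sup>2 * E) + (1 + \<alpha> * \<rho>) * E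
        = cE * E + cD * D + cPP * P"
      unfolding cE_def cD_def cPP_def by (simp add: algebra_simps)
    define LHS where "LHS = (1 + \<alpha> * \<rho>) * E + \<alpha> / \<beta> * Mu1"
    define RHS where "RHS = D + \<alpha> / \<beta> * Mu + \<alpha> * \<rho> * P"
    have h1: "LHS \<le> cE * E + cD * D + cPP * P" unfolding LHS_def using g3 g4 g5 by linarith
    have h2: "\<delta> * LHS \<le> \<delta> * (cE * E + cD * D + cPP * P)" using h1 \<delta>_pos by (simp add: mult_left_mono)
    have h3: "\<delta> * (cE * E + cD * D + cPP * P) = (\<delta> * cE) * E + (\<delta> * cD) * D + (\<delta> * cPP) * P"
      by (simp add: algebra_simps)
    have h4: "(\<delta> * cE) * E \<le> (\<alpha> * (s / 4)) * E" using \<delta>E D_nn(2) by (rule mult_right_mono)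
    have h5: "(\<delta> * cD) * D \<le> (\<alpha> * \<gamma>) * D" using \<delta>D D_nn(1) by (rule mult_right_mono)
    have h6: "(\<delta> * cPP) * P \<le> (\<alpha> * cP) * P" using \<delta>P D_nn(5) by (rule mult_right_mono)
    have "\<delta> * LHS \<le> \<Delta>" using h2 h3 h4 h5 h6 Q_bound \<Delta>_bound by linarith
    moreover have "\<Delta> = RHS - LHS" unfolding \<Delta>_def LHS_def RHS_def by simp
    moreover have "(1 + \<delta>) * LHS = LHS + \<delta> * LHS" by (simp add: algebra_simps)
    ultimately have "(1 + \<delta>) * LHS \<le> RHS" by linarith
    then have fin: "LHS \<le> 1 / (1 + \<delta>) * RHS" using \<delta>_pos by (simp add: field_simps)
    then show ?thesis
      unfolding LHS_def RHS_def D_def E_def Mu_def Mu1_def P_def dd_def ee_def mu_def mu1_def pp_def yv_def .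
  qed
  show ?thesis
  proof (intro exI[of _ \<delta>] conjI allI)
    show "0 < \<delta>" by (rule \<delta>_pos)
  next
    fix k
    show "(1 + \<alpha> * max_eig B) * (norm (xi (Suc k) T - xs))\<^sup>2
            + \<alpha> / \<beta> * (norm (lam (Suc k) - ls))\<^sup>2
          \<le> 1 / (1 + \<delta>) * ((norm (xi (Suc k) (T - 1) - xs))\<^sup>2
            + \<alpha> / \<beta> * (norm (lam k - ls))\<^sup>2 + \<alpha> * max_eig B * (norm (x k - xs))\<^sup>2)"
      using main[of k] unfolding \<rho>_def .
  qed
qed
end
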